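(* Let $\mathbf{W}$ be a random variable with values in $\mathbb{W}=\mathbb{R}^{n_w}$ taking a finite number of values, with (finite) support $\mathrm{Supp}(\mathbf{W})$. Let $L:\mathbb{X}\times\mathbb{U}\times\mathbb{W}\times\mathbb{P}\to\,]-\infty,+\infty]$ be a function and $f:\mathbb{X}\times\mathbb{U}\times\mathbb{W}\to\mathbb{X}$ be a mapping which is affine in $(x,u)$. Define the Bellman operator $\mathcal{B}$, acting on functions $\varphi:\mathbb{X}\times\mathbb{P}\to\,]-\infty,+\infty]$, by $$\mathcal{B}(\varphi)(x,p)=\inf_{u\in\mathbb{U}}\mathbb{E}\big[L(x,u,\mathbf{W},p)+\varphi\big(f(x,u,\mathbf{W}),p\big)\big],\qquad\forall (x,p)\in\mathbb{X}\times\mathbb{P}.$$ For $w\in\mathrm{Supp}(\mathbf{W})$ write $L_w=L(\cdot,\cdot,w,\cdot)$. Then: 1. If $L_w\in\Gamma_{\mathcal{K}}[\mathbb{X}\times\mathbb{U},\mathbb{P}]$ for all $w\in\mathrm{Supp}(\mathbf{W})$, then $\mathcal{B}$ maps $\Gamma[\mathbb{X},\mathbb{P}]$ into itself. 2. If, for a given set $\mathcal{P}\subset\mathbb{P}$, $L_w\in\Theta_{\mathcal{K}}[\mathbb{X}\times\mathbb{U},\mathcal{P}]$ for all $w\in\mathrm{Supp}(\mathbf{W})$, then $\mathcal{B}$ maps $\Theta[\mathbb{X},\mathcal{P}]$ into itself. Moreover, for every $\varphi\in\Theta[\mathbb{X},\mathcal{P}]$ and all $(x,p)\in\mathrm{dom}(\mathcal{B}(\varphi))$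 with $p\in\mathrm{int}\,\mathcal{P}$, the infimum defining $\mathcal{B}(\varphi)(x,p)$ is attained (the argmin set is nonempty) and the gradient of $\mathcal{B}(\varphi)(x,\cdot)$ at $p$ is $$\nabla_p\mathcal{B}(\varphi)(x,p)=\mathbb{E}\big[\nabla_pL(x,u^\star,\mathbf{W},p)+\nabla_p\varphi\big(f(x,u^\star,\mathbf{W}),p\big)\big]$$ for any $u^\star\in\mathbb{U}$ in the argmin set of the infimum defining $\mathcal{B}(\varphi)(x,p)$.
   Context: $\mathbb{X}=\mathbb{R}^{n_x}$, $\mathbb{U}=\mathbb{R}^{n_u}$, $\mathbb{P}=\mathbb{R}^{n_p}$ are Euclidean spaces. For a function $g$ with values in $]-\infty,+\infty]$, $\mathrm{dom}\,g=\{g<+\infty\}$. For a Euclidean space $\mathbb{Y}$: $\Gamma[\mathbb{Y},\mathbb{P}]$ is the set of lower semicontinuous convex functions $\gamma:\mathbb{Y}\times\mathbb{P}\to\,]-\infty,+\infty]$. For $\mathcal{P}\subset\mathbb{P}$, $\Theta[\mathbb{Y},\mathcal{P}]$ is the set of $\theta\in\Gamma[\mathbb{Y},\mathbb{P}]$ such that (i) $\mathrm{dom}\,\theta=Y_\theta\times\mathcal{P}$ for some (possibly empty) set $Y_\theta\subset\mathbb{Y}$, and (ii) for all $y\in Y_\theta$, $\theta(y,\cdot)$ is differentiable on $\mathrm{int}\,\mathcal{P}$. $\Gamma_{\mathcal{K}}[\mathbb{X}\times\mathbb{U},\mathbb{P}]$ is the set of $\gamma\in\Gamma[\mathbb{X}\times\mathbb{U},\mathbb{P}]$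 for which there is a compact set $\mathcal{K}_\gamma\subset\mathbb{U}$ with $\mathrm{dom}\,\gamma(x,\cdot,p)\subset\mathcal{K}_\gamma$ for all $(x,p)\in\mathbb{X}\times\mathbb{P}$. $\Theta_{\mathcal{K}}[\mathbb{X}\times\mathbb{U},\mathcal{P}]=\Theta[\mathbb{X}\times\mathbb{U},\mathcal{P}]\cap\Gamma_{\mathcal{K}}[\mathbb{X}\times\mathbb{U},\mathbb{P}]$. "Maps into itself" means $\mathcal{B}(\varphi)$ belongs to the class whenever $\varphi$ does. *)

theory Defs
  imports "HOL-Analysis.Analysis" "HOL-Probability.Probability"
begin

definition lsc_fun :: "('a::topological_space \<Rightarrow> ereal) \<Rightarrow> bool" where
  "lsc_fun g \<longleftrightarrow> (\<forall>c::real. closed {z. g z \<le> ereal c})"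

text \<open>Convexity of a function with values in ]-oo,+oo] (convention 0 * oo = 0).\<close>
definition convex_fun :: "('a::real_vector \<Rightarrow> ereal) \<Rightarrow> bool" where
  "convex_fun g \<longleftrightarrow> (\<forall>a b t. 0 \<le> t \<and> t \<le> 1 \<longrightarrow>
      g ((1 - t) *\<^sub>R a + t *\<^sub>R b) \<le> ereal (1 - t) * g a + ereal t * g b)"

definition Gamma :: "('y::euclidean_space \<Rightarrow> 'p::euclidean_space \<Rightarrow> ereal) set" where
  "Gamma = {\<gamma>. (\<forall>y p. \<gamma> y p \<noteq> -\<infinity>) \<and> lsc_fun (\<lambda>(y,p). \<gamma> y p)
                \<and> convex_fun (\<lambda>(y,p). \<gamma> y p)}"

definition Theta :: "'p set \<Rightarrow> ('y::euclidean_space \<Rightarrow> 'p::euclidean_space \<Rightarrow> ereal) set" where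
  "Theta P0 = {\<theta>. \<theta> \<in> Gamma \<and>
     (\<exists>Y. {(y,p). \<theta> y p < \<infinity>} = Y \<times> P0 \<and>
          (\<forall>y\<in>Y. \<forall>q\<in>interior P0. (\<lambda>p. real_of_ereal (\<theta> y p)) differentiable (at q)))}"

definition GammaK :: "('x::euclidean_space \<times> 'u::euclidean_space \<Rightarrow> 'p::euclidean_space \<Rightarrow> ereal) set" where
  "GammaK = {\<gamma>. \<gamma> \<in> Gamma \<and> (\<exists>K. compact K \<and> (\<forall>x p. {u. \<gamma> (x,u) p < \<infinity>} \<subseteq> K))}"

definition ThetaK :: "'p set \<Rightarrow> ('x::euclidean_space \<times> 'u::euclidean_space \<Rightarrow> 'p::euclidean_space \<Rightarrow> ereal) set" where
  "ThetaK P0 = Theta P0 \<inter> GammaK"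

definition affine_map :: "('a::real_vector \<Rightarrow> 'b::real_vector) \<Rightarrow> bool" where
  "affine_map g \<longleftrightarrow> (\<exists>h b. linear h \<and> (\<forall>z. g z = h z + b))"

definition expect :: "'w pmf \<Rightarrow> ('w \<Rightarrow> ereal) \<Rightarrow> ereal" where
  "expect W g = (\<Sum>w\<in>set_pmf W. ereal (pmf W w) * g w)"

definition bellman :: "'w pmf \<Rightarrow> ('x \<Rightarrow> 'u \<Rightarrow> 'w \<Rightarrow> 'p \<Rightarrow> ereal) \<Rightarrow> ('x \<Rightarrow> 'u \<Rightarrow> 'w \<Rightarrow> 'x)
     \<Rightarrow> ('x \<Rightarrow> 'p \<Rightarrow> ereal) \<Rightarrow> 'x \<Rightarrow> 'p \<Rightarrow> ereal" where
  "bellman W L f \<phi> x p = (INF u. expect W (\<lambda>w. L x u w p + \<phi> (f x u w) p))"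

definition Lw :: "('x \<Rightarrow> 'u \<Rightarrow> 'w \<Rightarrow> 'p \<Rightarrow> ereal) \<Rightarrow> 'w \<Rightarrow> 'x \<times> 'u \<Rightarrow> 'p \<Rightarrow> ereal" where
  "Lw L w = (\<lambda>xu p. L (fst xu) (snd xu) w p)"

definition grad :: "('p::euclidean_space \<Rightarrow> real) \<Rightarrow> 'p \<Rightarrow> 'p" where
  "grad g p = (SOME v. (g has_derivative (\<lambda>h. v \<bullet> h)) (at p))"

end

theory Submission
  imports Defs
begin


lemma lsc_open: "lsc_fun g \<longleftrightarrow> (\<forall>c::real. open {z. ereal c < g z})"
proof -
  have "\<And>c. {z. ereal c < g z} = - {z. g z \<le> ereal c}" by auto
  then show ?thesis unfolding lsc_fun_def by (simp add: closed_def)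
qed

lemma lsc_compose:
  assumes "lsc_fun g" "continuous_on UNIV h"
  shows "lsc_fun (\<lambda>z. g (h z))"
proof -
  have "closed (h -` {z. g z \<le> ereal c})" for c
    using assms(1) by (intro closed_vimage assms(2)) (simp add: lsc_fun_def)
  then show ?thesis unfolding lsc_fun_def by (simp add: vimage_def)
qed

lemma ereal_split_less:
  fixes a b :: ereal
  assumes "a \<noteq> -\<infinity>" "b \<noteq> -\<infinity>" "ereal c < a + b"
  shows "\<exists>c1. ereal c1 < a \<and> ereal (c - c1) < b"
proof (cases a)
  case (real ra)
  show ?thesis
  proof (cases b)
    case (real rb)
    then show ?thesis using \<open>a = ereal ra\<close> assms
      by (intro exI[of _ "ra - (ra + rb - c)/2"]) (auto simp: field_simps)
  next
    case PInf
    then show ?thesis using \<open>a = ereal ra\<close> by (intro exI[of _ "ra - 1"]) auto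
  next
    case MInf then show ?thesis using assms by simp
  qed
next
  case PInf
  obtain rb where "ereal rb < b" using assms(2)
    by (metis ereal_dense2 ereal_infty_less(2) less_ereal.elims(3))
  then show ?thesis using PInf by (intro exI[of _ "c - rb"]) auto
next
  case MInf then show ?thesis using assms by simp
qed

lemma lsc_add:
  assumes "lsc_fun g1" "lsc_fun g2" "\<And>z. g1 z \<noteq> -\<infinity>" "\<And>z. g2 z \<noteq> -\<infinity>"
  shows "lsc_fun (\<lambda>z. g1 z + g2 z)"
  unfolding lsc_open
proof
  fix c
  have "{z. ereal c < g1 z + g2 z} = (\<Union>c1. {z. ereal c1 < g1 z} \<inter> {z. ereal (c - c1) < g2 z})"
  proof (safe)
    fix z assume "ereal c < g1 z + g2 z"
    then show "z \<in> (\<Union>c1. {z. ereal c1 < g1 z} \<inter> {z. ereal (c - c1) < g2 z})"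
      using ereal_split_less[OF assms(3,4)] by blast
  next
    fix z c1 assume "ereal c1 < g1 z" "ereal (c - c1) < g2 z"
    then have "ereal c1 + ereal (c - c1) < g1 z + g2 z"
      by (cases "g1 z"; cases "g2 z") auto
    then show "ereal c < g1 z + g2 z" by simp
  qed
  moreover have "open (\<Union>c1. {z. ereal c1 < g1 z} \<inter> {z. ereal (c - c1) < g2 z})"
    using assms(1,2) unfolding lsc_open by blast
  ultimately show "open {z. ereal c < g1 z + g2 z}" by simp
qed

lemma lsc_scale:
  assumes "lsc_fun g" "r > 0"
  shows "lsc_fun (\<lambda>z. ereal r * g z)"
  unfolding lsc_open
proof
  fix c
  have "{z. ereal c < ereal r * g z} = {z. ereal (c / r) < g z}"
  proof -
    have "ereal c < ereal r * y \<longleftrightarrow> ereal (c / r) < y" for y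
      using assms(2) by (cases y) (auto simp: field_simps)
    then show ?thesis by simp
  qed
  then show "open {z. ereal c < ereal r * g z}" using assms(1) unfolding lsc_open by simp
qed

lemma lsc_const: "lsc_fun (\<lambda>z. ereal a)"
  unfolding lsc_fun_def by (cases "\<forall>c. a \<le> c") auto

lemma sum_nMInf:
  fixes g :: "'a \<Rightarrow> ereal"
  assumes "\<And>i. i \<in> S \<Longrightarrow> g i \<noteq> -\<infinity>"
  shows "(\<Sum>i\<in>S. g i) \<noteq> -\<infinity>"
  using assms by (induction S rule: infinite_finite_induct) auto

lemma lsc_sum:
  assumes "finite S" "\<And>i. i \<in> S \<Longrightarrow> lsc_fun (g i)" "\<And>i z. i \<in> S \<Longrightarrow> g i z \<noteq> -\<infinity>"
  shows "lsc_fun (\<lambda>z. \<Sum>i\<in>S. g i z)"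
  using assms
proof (induction S rule: finite_induct)
  case empty
  then show ?case using lsc_const[of 0] by (simp add: zero_ereal_def)
next
  case (insert i S)
  have "lsc_fun (\<lambda>z. g i z + (\<Sum>i\<in>S. g i z))"
    using insert by (intro lsc_add) (auto simp: sum_nMInf)
  then show ?case using insert by simp
qed




lemma conv_char:
  assumes "\<And>z. g z \<noteq> -\<infinity>"
  assumes H: "\<And>a b t. 0<t \<Longrightarrow> t<1 \<Longrightarrow> g a \<noteq> \<infinity> \<Longrightarrow> g b \<noteq> \<infinity> \<Longrightarrow>
     g ((1-t) *\<^sub>R a + t *\<^sub>R b) \<le> ereal ((1-t) * real_of_ereal (g a) + t * real_of_ereal (g b))"
  shows "convex_fun g"
  unfolding convex_fun_def
proof (intro allI impI)
  fix a b and t :: real assume t: "0 \<le> t \<and> t \<le> 1"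
  show "g ((1 - t) *\<^sub>R a + t *\<^sub>R b) \<le> ereal (1 - t) * g a + ereal t * g b"
  proof (cases "t = 0 \<or> t = 1")
    case True then show ?thesis by (auto simp: zero_ereal_def[symmetric])
  next
    case False
    then have t': "0 < t" "t < 1" using t by auto
    show ?thesis
    proof (cases "g a = \<infinity> \<or> g b = \<infinity>")
      case True
      then have "ereal (1 - t) * g a + ereal t * g b = \<infinity>"
        using t' assms(1)[of a] assms(1)[of b] by (cases "g a"; cases "g b") auto
      then show ?thesis by (metis top_greatest top_ereal_def)
    next
      case False
      then obtain ra rb where "g a = ereal ra" "g b = ereal rb"
        using assms(1)[of a] assms(1)[of b] by (cases "g a"; cases "g b") auto
      then show ?thesis using H[OF t', of a b] by simp
    qed
  qed
qed

lemma conv_use: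
  assumes "convex_fun g" "g a \<noteq> \<infinity>" "g b \<noteq> \<infinity>" "g a \<noteq> -\<infinity>" "g b \<noteq> -\<infinity>" "0 \<le> t" "t \<le> 1"
  shows "g ((1-t) *\<^sub>R a + t *\<^sub>R b) \<le> ereal ((1-t) * real_of_ereal (g a) + t * real_of_ereal (g b))"
proof -
  obtain ra rb where "g a = ereal ra" "g b = ereal rb"
    using assms by (cases "g a"; cases "g b") auto
  then show ?thesis using assms(1,6,7) unfolding convex_fun_def by (metis real_of_ereal.simps(1) times_ereal.simps(1) plus_ereal.simps(1))
qed

lemma conv_add:
  assumes "convex_fun g1" "convex_fun g2" "\<And>z. g1 z \<noteq> -\<infinity>" "\<And>z. g2 z \<noteq> -\<infinity>"
  shows "convex_fun (\<lambda>z. g1 z + g2 z)"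
proof (rule conv_char)
  show "g1 z + g2 z \<noteq> -\<infinity>" for z using assms(3,4)[of z] by simp
  fix a b and t :: real assume t: "0 < t" "t < 1" and fa: "g1 a + g2 a \<noteq> \<infinity>" and fb: "g1 b + g2 b \<noteq> \<infinity>"
  have f: "g1 a \<noteq> \<infinity>" "g2 a \<noteq> \<infinity>" "g1 b \<noteq> \<infinity>" "g2 b \<noteq> \<infinity>"
    using fa fb assms(3,4) by auto
  have "g1 ((1-t) *\<^sub>R a + t *\<^sub>R b) + g2 ((1-t) *\<^sub>R a + t *\<^sub>R b)
     \<le> ereal ((1-t) * real_of_ereal (g1 a) + t * real_of_ereal (g1 b)) + ereal ((1-t) * real_of_ereal (g2 a) + t * real_of_ereal (g2 b))"
    using conv_use[OF assms(1) f(1,3)] conv_use[OF assms(2) f(2,4)] assms(3,4) t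
    by (intro add_mono) auto
  also have "\<dots> = ereal ((1-t) * real_of_ereal (g1 a + g2 a) + t * real_of_ereal (g1 b + g2 b))"
    using f assms(3,4)[of a] assms(3,4)[of b]
    by (cases "g1 a"; cases "g2 a"; cases "g1 b"; cases "g2 b") (auto simp: algebra_simps)
  finally show "g1 ((1-t) *\<^sub>R a + t *\<^sub>R b) + g2 ((1-t) *\<^sub>R a + t *\<^sub>R b) \<le> ereal ((1-t) * real_of_ereal (g1 a + g2 a) + t * real_of_ereal (g1 b + g2 b))" .
qed

lemma conv_scale:
  assumes "convex_fun g" "r > 0" "\<And>z. g z \<noteq> -\<infinity>"
  shows "convex_fun (\<lambda>z. ereal r * g z)"
proof (rule conv_char)
  show "ereal r * g z \<noteq> -\<infinity>" for z using assms(2) assms(3)[of z] by (cases "g z") auto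
  fix a b and t :: real assume t: "0 < t" "t < 1" and fa: "ereal r * g a \<noteq> \<infinity>" and fb: "ereal r * g b \<noteq> \<infinity>"
  have f: "g a \<noteq> \<infinity>" "g b \<noteq> \<infinity>" using fa fb assms(2) by auto
  have "ereal r * g ((1-t) *\<^sub>R a + t *\<^sub>R b) \<le> ereal r * ereal ((1-t) * real_of_ereal (g a) + t * real_of_ereal (g b))"
    using conv_use[OF assms(1) f] assms(2,3) t by (intro ereal_mult_left_mono) auto
  also have "\<dots> = ereal ((1-t) * real_of_ereal (ereal r * g a) + t * real_of_ereal (ereal r * g b))"
    using f assms(3)[of a] assms(3)[of b]
    by (cases "g a"; cases "g b") (auto simp: algebra_simps)
  finally show "ereal r * g ((1-t) *\<^sub>R a + t *\<^sub>R b) \<le> ereal ((1-t) * real_of_ereal (ereal r * g a) + t * real_of_ereal (ereal r * g b))" .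
qed

lemma conv_const: "convex_fun (\<lambda>z. 0::ereal)"
  unfolding convex_fun_def by simp

lemma conv_sum:
  assumes "finite S" "\<And>i. i \<in> S \<Longrightarrow> convex_fun (g i)" "\<And>i z. i \<in> S \<Longrightarrow> g i z \<noteq> -\<infinity>"
  shows "convex_fun (\<lambda>z. \<Sum>i\<in>S. g i z)"
  using assms
proof (induction S rule: finite_induct)
  case empty
  then show ?case using conv_const by simp
next
  case (insert i S)
  have "convex_fun (\<lambda>z. g i z + (\<Sum>i\<in>S. g i z))"
    using insert by (intro conv_add) (auto simp: sum_nMInf)
  then show ?case using insert by simp
qed

lemma affine_comb:
  assumes "affine_map h"
  shows "h ((1-t) *\<^sub>R a + t *\<^sub>R b) = (1-t) *\<^sub>R h a + t *\<^sub>R h b"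
proof -
  obtain l c where "linear l" "\<And>z. h z = l z + c" using assms unfolding affine_map_def by blast
  moreover have "l ((1-t) *\<^sub>R a + t *\<^sub>R b) = (1-t) *\<^sub>R l a + t *\<^sub>R l b"
    by (simp only: linear_add[OF \<open>linear l\<close>] linear_scale[OF \<open>linear l\<close>])
  ultimately show ?thesis by (simp add: algebra_simps)
qed

lemma conv_compose:
  assumes "convex_fun g" "affine_map h"
  shows "convex_fun (\<lambda>z. g (h z))"
  using assms(1) unfolding convex_fun_def affine_comb[OF assms(2)] by blast

lemma affine_cont:
  fixes h :: "'a::euclidean_space \<Rightarrow> 'b::euclidean_space"
  assumes "affine_map h"
  shows "continuous_on UNIV h"
proof -
  obtain l c where "linear l" "\<And>z. h z = l z + c" using assms unfolding affine_map_def by blast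
  moreover have "continuous_on UNIV l" using \<open>linear l\<close> by (simp add: linear_continuous_on linear_conv_bounded_linear)
  ultimately show ?thesis by (auto intro!: continuous_intros)
qed




lemma attain:
  fixes F :: "'u::euclidean_space \<Rightarrow> ereal"
  assumes lsc: "lsc_fun F" and K: "compact K" and dom: "\<And>u. F u \<noteq> \<infinity> \<Longrightarrow> u \<in> K"
  shows "\<exists>u. (INF u. F u) = F u"
proof (cases "(INF u. F u) = \<infinity>")
  case True
  then show ?thesis by (metis INF_lower UNIV_I top.extremum_uniqueI top_ereal_def)
next
  case False
  define m where "m = (INF u. F u)"
  define \<F> where "\<F> = {K \<inter> {u. F u \<le> ereal c} | c. m < ereal c}"
  have "\<Inter>\<F> \<noteq> {}"
  proof (rule compact_chain)
    show "compact S" if "S \<in> \<F>" for S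
      using that K lsc unfolding \<F>_def lsc_fun_def by (auto intro: closed_Int_compact)
    show "{} \<notin> \<F>"
    proof
      assume "{} \<in> \<F>"
      then obtain c where c: "m < ereal c" "K \<inter> {u. F u \<le> ereal c} = {}" unfolding \<F>_def by auto
      then obtain u where "F u < ereal c" unfolding m_def by (auto simp: INF_less_iff)
      then have "F u \<noteq> \<infinity>" by auto
      then have "u \<in> K" using dom by blast
      then show False using c \<open>F u < ereal c\<close> by auto
    qed
    show "S \<subseteq> T \<or> T \<subseteq> S" if ST: "S \<in> \<F> \<and> T \<in> \<F>" for S T
    proof -
      obtain c1 c2 where "S = K \<inter> {u. F u \<le> ereal c1}" "T = K \<inter> {u. F u \<le> ereal c2}"
        using ST unfolding \<F>_def by blast
      moreover have "c1 \<le> c2 \<or> c2 \<le> c1" by linarith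
      ultimately show ?thesis by (auto intro: order.trans)
    qed
  qed
  then obtain u where u: "u \<in> \<Inter>\<F>" by blast
  have "F u \<le> ereal c" if "m < ereal c" for c
    using u that unfolding \<F>_def by blast
  then have "F u \<le> m"
    by (metis dense_le_bounded ereal_dense2 less_ereal.elims(2) not_le)
  moreover have "m \<le> F u" unfolding m_def by (rule INF_lower) simp
  ultimately show ?thesis unfolding m_def by (intro exI[of _ u]) auto
qed




definition GG :: "'w pmf \<Rightarrow> ('x \<Rightarrow> 'u \<Rightarrow> 'w \<Rightarrow> 'p \<Rightarrow> ereal) \<Rightarrow> ('x \<Rightarrow> 'u \<Rightarrow> 'w \<Rightarrow> 'x)
     \<Rightarrow> ('x \<Rightarrow> 'p \<Rightarrow> ereal) \<Rightarrow> ('x \<times> 'u) \<times> 'p \<Rightarrow> ereal" where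
  "GG W L f \<phi> z = expect W (\<lambda>w. L (fst (fst z)) (snd (fst z)) w (snd z) + \<phi> (f (fst (fst z)) (snd (fst z)) w) (snd z))"

lemma bellman_GG: "bellman W L f \<phi> x p = (INF u. GG W L f \<phi> ((x,u),p))"
  by (simp add: bellman_def GG_def)

lemma GG_expect: "GG W L f \<phi> ((x,u),p) = expect W (\<lambda>w. L x u w p + \<phi> (f x u w) p)"
  by (simp add: GG_def)

lemma affine_pair:
  fixes F :: "'a::real_vector \<Rightarrow> 'c::real_vector"
  assumes "affine_map F"
  shows "affine_map (\<lambda>z::'a \<times> 'b::real_vector. (F (fst z), snd z))"
proof -
  obtain l c where l: "linear l" "\<And>z. F z = l z + c" using assms unfolding affine_map_def by blast
  have "linear (\<lambda>z. (l (fst z), snd z))"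
    using l(1) by (intro linearI) (auto simp: linear_add linear_scale)
  moreover have "(F (fst z), snd z) = (l (fst z), snd z) + (c, 0)" for z :: "'a \<times> 'b" using l(2) by simp
  ultimately show ?thesis unfolding affine_map_def by blast
qed

lemma affine_slice:
  "affine_map (\<lambda>q::'b::real_vector. (x::'a::real_vector, q))"
proof -
  have "linear (\<lambda>q::'b. (0::'a, q))" by (intro linearI) auto
  moreover have "(x, q) = (0, q) + (x, 0)" for q :: 'b by simp
  ultimately show ?thesis unfolding affine_map_def by blast
qed

context
  fixes W :: "'w::euclidean_space pmf"
    and L :: "'x::euclidean_space \<Rightarrow> 'u::euclidean_space \<Rightarrow> 'w \<Rightarrow> 'p::euclidean_space \<Rightarrow> ereal"
    and f :: "'x \<Rightarrow> 'u \<Rightarrow> 'w \<Rightarrow> 'x"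
    and \<phi> :: "'x \<Rightarrow> 'p \<Rightarrow> ereal"
  assumes fin: "finite (set_pmf W)"
    and nI: "\<forall>x u w p. L x u w p \<noteq> -\<infinity>"
    and aff: "\<forall>w. affine_map (\<lambda>(x,u). f x u w)"
    and LK: "\<forall>w\<in>set_pmf W. Lw L w \<in> GammaK"
    and phi: "\<phi> \<in> Gamma"
begin

lemma phi_nI: "\<phi> y p \<noteq> -\<infinity>" using phi unfolding Gamma_def by auto

lemma term_nI: "ereal (pmf W w) * (L x u w p + \<phi> y p) \<noteq> -\<infinity>"
  using nI phi_nI[of y p] pmf_nonneg[of W w]
  by (cases "L x u w p"; cases "\<phi> y p") (auto simp: ereal_mult_eq_MInfty)

lemma GG_nI: "GG W L f \<phi> z \<noteq> -\<infinity>"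
  unfolding GG_def expect_def by (rule sum_nMInf) (rule term_nI)

lemma GG_lsc: "lsc_fun (GG W L f \<phi>)"
proof -
  have "lsc_fun (\<lambda>z. ereal (pmf W w) * (L (fst (fst z)) (snd (fst z)) w (snd z) + \<phi> (f (fst (fst z)) (snd (fst z)) w) (snd z)))"
    if w: "w \<in> set_pmf W" for w
  proof (rule lsc_scale)
    show "0 < pmf W w" using w by (simp add: pmf_positive)
    have l1: "lsc_fun (\<lambda>(y,p). Lw L w y p)" using LK w unfolding GammaK_def Gamma_def by auto
    have l1': "lsc_fun (\<lambda>z. L (fst (fst z)) (snd (fst z)) w (snd z))"
      using l1 by (simp add: Lw_def case_prod_unfold)
    have l2: "lsc_fun (\<lambda>(y,p). \<phi> y p)" using phi unfolding Gamma_def by auto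
    have c: "continuous_on UNIV (\<lambda>z::('x \<times> 'u) \<times> 'p. ((\<lambda>(x,u). f x u w) (fst z), snd z))"
      using affine_cont[OF affine_pair[OF aff[rule_format, of w]]] by simp
    have l2': "lsc_fun (\<lambda>z. \<phi> (f (fst (fst z)) (snd (fst z)) w) (snd z))"
      using lsc_compose[OF l2 c] by (simp add: case_prod_unfold)
    show "lsc_fun (\<lambda>z. L (fst (fst z)) (snd (fst z)) w (snd z) + \<phi> (f (fst (fst z)) (snd (fst z)) w) (snd z))"
      using l1' l2' nI phi_nI by (intro lsc_add) auto
  qed
  then show ?thesis unfolding GG_def[abs_def] expect_def
    by (intro lsc_sum fin) (blast, rule term_nI)
qed

lemma GG_conv: "convex_fun (GG W L f \<phi>)"
proof -
  have "convex_fun (\<lambda>z. ereal (pmf W w) * (L (fst (fst z)) (snd (fst z)) w (snd z) + \<phi> (f (fst (fst z)) (snd (fst z)) w) (snd z)))"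
    if w: "w \<in> set_pmf W" for w
  proof (rule conv_scale)
    show "0 < pmf W w" using w by (simp add: pmf_positive)
    have l1: "convex_fun (\<lambda>(y,p). Lw L w y p)" using LK w unfolding GammaK_def Gamma_def by auto
    have l1': "convex_fun (\<lambda>z. L (fst (fst z)) (snd (fst z)) w (snd z))"
      using l1 by (simp add: Lw_def case_prod_unfold)
    have l2: "convex_fun (\<lambda>(y,p). \<phi> y p)" using phi unfolding Gamma_def by auto
    have l2': "convex_fun (\<lambda>z. \<phi> (f (fst (fst z)) (snd (fst z)) w) (snd z))"
      using conv_compose[OF l2 affine_pair[OF aff[rule_format, of w]]] by (simp add: case_prod_unfold)
    show "convex_fun (\<lambda>z. L (fst (fst z)) (snd (fst z)) w (snd z) + \<phi> (f (fst (fst z)) (snd (fst z)) w) (snd z))"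
      using l1' l2' nI phi_nI by (intro conv_add) auto
    show "L (fst (fst z)) (snd (fst z)) w (snd z) + \<phi> (f (fst (fst z)) (snd (fst z)) w) (snd z) \<noteq> -\<infinity>" for z
      using nI phi_nI by auto
  qed
  then show ?thesis unfolding GG_def[abs_def] expect_def
    by (intro conv_sum fin) (blast, rule term_nI)
qed

lemma GG_fin_iff:
  "GG W L f \<phi> ((x,u),p) \<noteq> \<infinity> \<longleftrightarrow> (\<forall>w\<in>set_pmf W. L x u w p \<noteq> \<infinity> \<and> \<phi> (f x u w) p \<noteq> \<infinity>)"
proof -
  have "ereal (pmf W w) * (L x u w p + \<phi> (f x u w) p) = \<infinity> \<longleftrightarrow> (L x u w p = \<infinity> \<or> \<phi> (f x u w) p = \<infinity>)"
    if "w \<in> set_pmf W" for w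
    using that nI phi_nI[of "f x u w" p] by (cases "L x u w p"; cases "\<phi> (f x u w) p") (auto simp: set_pmf_iff)
  then show ?thesis unfolding GG_def expect_def using fin by (auto simp: sum_Pinfty)
qed

lemma GG_dom: "\<exists>K. compact K \<and> (\<forall>x u p. GG W L f \<phi> ((x,u),p) \<noteq> \<infinity> \<longrightarrow> u \<in> K)"
proof -
  obtain w0 where w0: "w0 \<in> set_pmf W" using set_pmf_not_empty by (meson ex_in_conv)
  then obtain K where K: "compact K" "\<And>x p. {u. Lw L w0 (x,u) p < \<infinity>} \<subseteq> K"
    using LK unfolding GammaK_def by blast
  have "u \<in> K" if "GG W L f \<phi> ((x,u),p) \<noteq> \<infinity>" for x u p
    using that w0 K(2)[of x p] unfolding GG_fin_iff by (auto simp: Lw_def less_top[symmetric])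
  then show ?thesis using K(1) by blast
qed

lemma B_attain: "\<exists>u. bellman W L f \<phi> x p = GG W L f \<phi> ((x,u),p)"
proof -
  obtain K where K: "compact K" "\<And>x u p. GG W L f \<phi> ((x,u),p) \<noteq> \<infinity> \<Longrightarrow> u \<in> K"
    using GG_dom by blast
  have "lsc_fun (\<lambda>u. GG W L f \<phi> ((x,u),p))"
    by (rule lsc_compose[OF GG_lsc]) (auto intro!: continuous_intros)
  then show ?thesis unfolding bellman_GG using attain K by blast
qed

lemma B_nI: "bellman W L f \<phi> x p \<noteq> -\<infinity>"
  using B_attain GG_nI by metis

lemma B_le: "bellman W L f \<phi> x p \<le> GG W L f \<phi> ((x,u),p)"
  unfolding bellman_GG by (rule INF_lower) simp


lemma B_lsc: "lsc_fun (\<lambda>(x,p). bellman W L f \<phi> x p)"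
  unfolding lsc_fun_def
proof
  fix c :: real
  obtain K where K: "compact K" "\<And>x u p. GG W L f \<phi> ((x,u),p) \<noteq> \<infinity> \<Longrightarrow> u \<in> K"
    using GG_dom by blast
  define T where "T = {uz :: 'u \<times> ('x \<times> 'p). GG W L f \<phi> ((fst (snd uz), fst uz), snd (snd uz)) \<le> ereal c}"
  have "closed T"
  proof -
    have "lsc_fun (\<lambda>uz :: 'u \<times> ('x \<times> 'p). GG W L f \<phi> ((fst (snd uz), fst uz), snd (snd uz)))"
      by (rule lsc_compose[OF GG_lsc]) (auto intro!: continuous_intros)
    then show ?thesis unfolding T_def lsc_fun_def by blast
  qed
  have eq: "{z. (\<lambda>(x,p). bellman W L f \<phi> x p) z \<le> ereal c} = {z. \<exists>u. u \<in> K \<and> (u, z) \<in> T}"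
  proof (rule set_eqI)
    fix z :: "'x \<times> 'p"
    obtain x p where z: "z = (x,p)" by fastforce
    have "bellman W L f \<phi> x p \<le> ereal c \<longleftrightarrow> (\<exists>u. u \<in> K \<and> (u, z) \<in> T)"
    proof
      assume a: "bellman W L f \<phi> x p \<le> ereal c"
      obtain u where u: "bellman W L f \<phi> x p = GG W L f \<phi> ((x,u),p)" using B_attain by blast
      then have g: "GG W L f \<phi> ((x,u),p) \<le> ereal c" using a by simp
      then have "GG W L f \<phi> ((x,u),p) \<noteq> \<infinity>" by auto
      then have "u \<in> K" using K(2) by blast
      with g show "\<exists>u. u \<in> K \<and> (u, z) \<in> T" unfolding T_def z by auto
    next
      assume "\<exists>u. u \<in> K \<and> (u, z) \<in> T"
      then obtain u where "(u, z) \<in> T" by blast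
      then show "bellman W L f \<phi> x p \<le> ereal c"
        unfolding T_def z using B_le[of x p u] by auto
    qed
    then show "z \<in> {z. (\<lambda>(x,p). bellman W L f \<phi> x p) z \<le> ereal c} \<longleftrightarrow> z \<in> {z. \<exists>u. u \<in> K \<and> (u, z) \<in> T}"
      unfolding z by simp
  qed
  show "closed {z. (\<lambda>(x,p). bellman W L f \<phi> x p) z \<le> ereal c}"
    unfolding eq by (rule closed_compact_projection[OF K(1) \<open>closed T\<close>])
qed

lemma B_conv: "convex_fun (\<lambda>(x,p). bellman W L f \<phi> x p)"
proof (rule conv_char)
  show "(\<lambda>(x,p). bellman W L f \<phi> x p) z \<noteq> -\<infinity>" for z using B_nI by (simp add: case_prod_unfold)
  fix a b :: "'x \<times> 'p" and t :: real
  assume t: "0 < t" "t < 1" and fa: "(\<lambda>(x,p). bellman W L f \<phi> x p) a \<noteq> \<infinity>"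
     and fb: "(\<lambda>(x,p). bellman W L f \<phi> x p) b \<noteq> \<infinity>"
  obtain x1 p1 x2 p2 where ab: "a = (x1,p1)" "b = (x2,p2)" by fastforce
  obtain u1 where u1: "bellman W L f \<phi> x1 p1 = GG W L f \<phi> ((x1,u1),p1)" using B_attain by blast
  obtain u2 where u2: "bellman W L f \<phi> x2 p2 = GG W L f \<phi> ((x2,u2),p2)" using B_attain by blast
  have c: "(1-t) *\<^sub>R ((x1,u1),p1) + t *\<^sub>R ((x2,u2),p2) =
     (((1-t) *\<^sub>R x1 + t *\<^sub>R x2, (1-t) *\<^sub>R u1 + t *\<^sub>R u2), (1-t) *\<^sub>R p1 + t *\<^sub>R p2)" by simp
  have "bellman W L f \<phi> ((1-t) *\<^sub>R x1 + t *\<^sub>R x2) ((1-t) *\<^sub>R p1 + t *\<^sub>R p2)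
     \<le> GG W L f \<phi> ((1-t) *\<^sub>R ((x1,u1),p1) + t *\<^sub>R ((x2,u2),p2))"
    unfolding c by (rule B_le)
  also have "\<dots> \<le> ereal ((1-t) * real_of_ereal (GG W L f \<phi> ((x1,u1),p1)) + t * real_of_ereal (GG W L f \<phi> ((x2,u2),p2)))"
    using fa fb t u1 u2 unfolding ab by (intro conv_use GG_conv GG_nI) auto
  finally show "(\<lambda>(x,p). bellman W L f \<phi> x p) ((1-t) *\<^sub>R a + t *\<^sub>R b) \<le>
    ereal ((1-t) * real_of_ereal ((\<lambda>(x,p). bellman W L f \<phi> x p) a) + t * real_of_ereal ((\<lambda>(x,p). bellman W L f \<phi> x p) b))"
    unfolding ab using u1 u2 by simp
qed

lemma B_Gamma: "bellman W L f \<phi> \<in> Gamma"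
  unfolding Gamma_def using B_nI B_lsc B_conv by auto

end




lemma grad_ok:
  fixes h :: "'p::euclidean_space \<Rightarrow> real"
  assumes "h differentiable (at p)"
  shows "(h has_derivative (\<lambda>k. grad h p \<bullet> k)) (at p)"
proof -
  obtain D where D: "(h has_derivative D) (at p)" using assms unfolding differentiable_def by blast
  then have "linear D" using has_derivative_linear by blast
  then have "D k = k \<bullet> adjoint D 1" for k using adjoint_works[of D k 1] by simp
  then have "(h has_derivative (\<lambda>k. adjoint D 1 \<bullet> k)) (at p)" using D
    by (metis (no_types, lifting) ext inner_commute)
  then have "\<exists>v. (h has_derivative (\<lambda>k. v \<bullet> k)) (at p)" by blast
  then show ?thesis unfolding grad_def by (rule someI_ex)
qed

lemma zero_deriv_squeeze:
  fixes e s :: "'p::euclidean_space \<Rightarrow> real"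
  assumes s: "(s has_derivative (\<lambda>h. 0)) (at p)" and e0: "e p = 0"
    and ev: "eventually (\<lambda>y. 0 \<le> e y \<and> e y \<le> s y - s p) (at p)"
  shows "(e has_derivative (\<lambda>h. 0)) (at p)"
  unfolding has_derivative_iff_norm
proof
  show "bounded_linear (\<lambda>h::'p. 0::real)" by simp
  have S: "((\<lambda>y. norm (s y - s p - 0) / norm (y - p)) \<longlongrightarrow> 0) (at p)"
    using s unfolding has_derivative_iff_norm by simp
  show "((\<lambda>y. norm (e y - e p - 0) / norm (y - p)) \<longlongrightarrow> 0) (at p)"
  proof (rule tendsto_sandwich[OF _ _ tendsto_const S])
    show "eventually (\<lambda>y. 0 \<le> norm (e y - e p - 0) / norm (y - p)) (at p)" by simp
    show "eventually (\<lambda>y. norm (e y - e p - 0) / norm (y - p) \<le> norm (s y - s p - 0) / norm (y - p)) (at p)"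
      using ev by eventually_elim (auto simp: e0 intro!: divide_right_mono)
  qed
qed

lemma diff_core:
  fixes v :: "'p::euclidean_space \<Rightarrow> ereal" and g :: "'p \<Rightarrow> real"
  assumes p: "p \<in> interior P0" and up: "\<forall>q\<in>P0. v q \<le> ereal (g q)" and eq: "v p = ereal (g p)"
    and nI: "\<forall>q. v q \<noteq> -\<infinity>" and cv: "convex_fun v" and dg: "(g has_derivative D) (at p)"
  shows "((\<lambda>q. real_of_ereal (v q)) has_derivative D) (at p)"
proof -
  obtain d where d: "d > 0" "ball p d \<subseteq> P0" using p mem_interior by blast
  define r where "r q = real_of_ereal (v q)" for q
  define e where "e q = g q - r q" for q
  define s where "s q = g q + g (p + (p - q))" for q
  have lin: "linear D" using dg has_derivative_linear by blast
  have dg': "(g has_derivative D) (at (p + (p - p)))" using dg by simp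
  have "((\<lambda>q. p + (p - q)) has_derivative (\<lambda>h. - h)) (at p)"
    by (auto intro!: derivative_eq_intros)
  from has_derivative_compose[OF this dg']
  have "((\<lambda>q. g (p + (p - q))) has_derivative (\<lambda>h. D (- h))) (at p)" .
  from has_derivative_add[OF dg this]
  have "(s has_derivative (\<lambda>h. D h + D (- h))) (at p)" unfolding s_def .
  moreover have "(\<lambda>h. D h + D (- h)) = (\<lambda>h. 0)" using lin by (simp add: linear_neg)
  ultimately have sd: "(s has_derivative (\<lambda>h. 0)) (at p)" by simp
  have fin: "v q = ereal (r q) \<and> r q \<le> g q" if "q \<in> P0" for q
    using up that nI[rule_format, of q] unfolding r_def by (cases "v q") auto
  have "r p = g p" using eq unfolding r_def by simp
  then have e0: "e p = 0" unfolding e_def by simp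
  have "\<forall>y. y \<noteq> p \<and> dist y p < d \<longrightarrow> 0 \<le> e y \<and> e y \<le> s y - s p"
  proof (intro allI impI)
    fix y assume "y \<noteq> p \<and> dist y p < d"
    then have y: "y \<in> P0" "p + (p - y) \<in> P0" using d(2)
      by (auto simp: dist_norm norm_minus_commute subset_iff)
    have mid: "(1 - 1/2) *\<^sub>R y + (1/2::real) *\<^sub>R (p + (p - y)) = p"
      by (simp add: algebra_simps flip: scaleR_add_left)
    have "v p \<le> ereal (1 - 1/2) * v y + ereal (1/2) * v (p + (p - y))"
      using cv unfolding convex_fun_def by (metis mid order_refl le_divide_eq_1_pos zero_le_divide_1_iff zero_less_numeral zero_le_numeral divide_le_eq_1_pos one_le_numeral)
    then have "g p \<le> r y / 2 + r (p + (p - y)) / 2"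
      using fin[OF y(1)] fin[OF y(2)] eq by simp
    then show "0 \<le> e y \<and> e y \<le> s y - s p"
      using fin[OF y(1)] fin[OF y(2)] unfolding e_def s_def by simp
  qed
  then have ev: "eventually (\<lambda>y. 0 \<le> e y \<and> e y \<le> s y - s p) (at p)"
    unfolding eventually_at using d(1) by blast
  have "(e has_derivative (\<lambda>h. 0)) (at p)" by (rule zero_deriv_squeeze[OF sd e0 ev])
  from has_derivative_diff[OF dg this]
  have "((\<lambda>q. g q - e q) has_derivative (\<lambda>h. D h - 0)) (at p)" .
  then show ?thesis unfolding e_def r_def by simp
qed




lemma Theta_dest:
  assumes "\<theta> \<in> Theta P0"
  shows "\<exists>Y. (\<forall>y p. \<theta> y p < \<infinity> \<longleftrightarrow> y \<in> Y \<and> p \<in> P0) \<and>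
     (\<forall>y\<in>Y. \<forall>q\<in>interior P0. (\<lambda>p. real_of_ereal (\<theta> y p)) differentiable (at q))"
proof -
  obtain Y where Y: "{(y,p). \<theta> y p < \<infinity>} = Y \<times> P0"
    "\<forall>y\<in>Y. \<forall>q\<in>interior P0. (\<lambda>p. real_of_ereal (\<theta> y p)) differentiable (at q)"
    using assms unfolding Theta_def by blast
  have "\<theta> y p < \<infinity> \<longleftrightarrow> y \<in> Y \<and> p \<in> P0" for y p
  proof -
    have "(y,p) \<in> {(y,p). \<theta> y p < \<infinity>} \<longleftrightarrow> (y,p) \<in> Y \<times> P0" using Y(1) by simp
    then show ?thesis by simp
  qed
  then show ?thesis using Y(2) by blast
qed

lemma part2:
  fixes W :: "'w::euclidean_space pmf"
    and L :: "'x::euclidean_space \<Rightarrow> 'u::euclidean_space \<Rightarrow> 'w \<Rightarrow> 'p::euclidean_space \<Rightarrow> ereal"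
    and f :: "'x \<Rightarrow> 'u \<Rightarrow> 'w \<Rightarrow> 'x"
    and \<phi> :: "'x \<Rightarrow> 'p \<Rightarrow> ereal"
  assumes fin: "finite (set_pmf W)"
    and nI: "\<forall>x u w p. L x u w p \<noteq> -\<infinity>"
    and aff: "\<forall>w. affine_map (\<lambda>(x,u). f x u w)"
    and LT: "\<forall>w\<in>set_pmf W. Lw L w \<in> ThetaK P0"
    and phiT: "\<phi> \<in> Theta P0"
  shows "bellman W L f \<phi> \<in> Theta P0 \<and>
        (\<forall>x p. bellman W L f \<phi> x p < \<infinity> \<and> p \<in> interior P0 \<longrightarrow>
           (\<exists>u. bellman W L f \<phi> x p = expect W (\<lambda>w. L x u w p + \<phi> (f x u w) p)) \<and>
           (\<forall>u. bellman W L f \<phi> x p = expect W (\<lambda>w. L x u w p + \<phi> (f x u w) p) \<longrightarrow>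
              ((\<lambda>q. real_of_ereal (bellman W L f \<phi> x q)) has_derivative
                 (\<lambda>h. (\<Sum>w\<in>set_pmf W. pmf W w *\<^sub>R
                     (grad (\<lambda>q. real_of_ereal (L x u w q)) p
                      + grad (\<lambda>q. real_of_ereal (\<phi> (f x u w) q)) p)) \<bullet> h)) (at p)))"
proof -
  let ?S = "set_pmf W"
  let ?B = "bellman W L f \<phi>"
  let ?G = "GG W L f \<phi>"
  have LK: "\<forall>w\<in>?S. Lw L w \<in> GammaK" using LT unfolding ThetaK_def by blast
  have phi: "\<phi> \<in> Gamma" using phiT unfolding Theta_def by blast
  note ctx = fin nI aff LK phi
  obtain Yp where Yp: "\<And>y p. \<phi> y p < \<infinity> \<longleftrightarrow> y \<in> Yp \<and> p \<in> P0"
    "\<forall>y\<in>Yp. \<forall>q\<in>interior P0. (\<lambda>p. real_of_ereal (\<phi> y p)) differentiable (at q)"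
    using Theta_dest[OF phiT] by blast
  have "\<forall>w\<in>?S. \<exists>Y. (\<forall>y p. Lw L w y p < \<infinity> \<longleftrightarrow> y \<in> Y \<and> p \<in> P0) \<and>
     (\<forall>y\<in>Y. \<forall>q\<in>interior P0. (\<lambda>p. real_of_ereal (Lw L w y p)) differentiable (at q))"
    using LT Theta_dest unfolding ThetaK_def by blast
  then obtain YL where YL0: "\<forall>w\<in>?S. (\<forall>y p. Lw L w y p < \<infinity> \<longleftrightarrow> y \<in> YL w \<and> p \<in> P0) \<and>
     (\<forall>y\<in>YL w. \<forall>q\<in>interior P0. (\<lambda>p. real_of_ereal (Lw L w y p)) differentiable (at q))"
    by (rule bchoice[THEN exE]) blast
  have YL: "\<And>w y p. w \<in> ?S \<Longrightarrow> L (fst y) (snd y) w p < \<infinity> \<longleftrightarrow> y \<in> YL w \<and> p \<in> P0"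
    "\<And>w y q. w \<in> ?S \<Longrightarrow> y \<in> YL w \<Longrightarrow> q \<in> interior P0 \<Longrightarrow> (\<lambda>p. real_of_ereal (L (fst y) (snd y) w p)) differentiable (at q)"
    using YL0 unfolding Lw_def by blast+
  obtain w0 where w0: "w0 \<in> ?S" using set_pmf_not_empty by (meson ex_in_conv)
  have Gfin: "?G ((x,u),p) \<noteq> \<infinity> \<longleftrightarrow> p \<in> P0 \<and> (\<forall>w\<in>?S. (x,u) \<in> YL w \<and> f x u w \<in> Yp)" for x u p
  proof -
    have "?G ((x,u),p) \<noteq> \<infinity> \<longleftrightarrow> (\<forall>w\<in>?S. L x u w p \<noteq> \<infinity> \<and> \<phi> (f x u w) p \<noteq> \<infinity>)"
      by (rule GG_fin_iff[OF ctx])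
    also have "\<dots> \<longleftrightarrow> (\<forall>w\<in>?S. ((x,u) \<in> YL w \<and> p \<in> P0) \<and> (f x u w \<in> Yp \<and> p \<in> P0))"
      using YL(1)[of _ "(x,u)" p] Yp(1) by (simp add: less_top)
    also have "\<dots> \<longleftrightarrow> p \<in> P0 \<and> (\<forall>w\<in>?S. (x,u) \<in> YL w \<and> f x u w \<in> Yp)"
      using w0 by blast
    finally show ?thesis .
  qed
  define Y' where "Y' = {x. \<exists>u. \<forall>w\<in>?S. (x,u) \<in> YL w \<and> f x u w \<in> Yp}"
  have Bfin: "?B x p < \<infinity> \<longleftrightarrow> x \<in> Y' \<and> p \<in> P0" for x p
  proof
    assume "?B x p < \<infinity>"
    moreover obtain u where "?B x p = ?G ((x,u),p)" using B_attain[OF ctx] by blast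
    ultimately show "x \<in> Y' \<and> p \<in> P0" using Gfin[of x u p] unfolding Y'_def by auto
  next
    assume "x \<in> Y' \<and> p \<in> P0"
    then obtain u where "?G ((x,u),p) \<noteq> \<infinity>" using Gfin unfolding Y'_def by blast
    moreover have "?B x p \<le> ?G ((x,u),p)" using B_le[OF ctx, of x p u] .
    ultimately show "?B x p < \<infinity>" by (cases "?B x p"; cases "?G ((x,u),p)") auto
  qed
  have DER: "((\<lambda>q. real_of_ereal (?B x q)) has_derivative
                 (\<lambda>h. (\<Sum>w\<in>?S. pmf W w *\<^sub>R
                     (grad (\<lambda>q. real_of_ereal (L x u w q)) p
                      + grad (\<lambda>q. real_of_ereal (\<phi> (f x u w) q)) p)) \<bullet> h)) (at p)"
    if p: "p \<in> interior P0" and Bf: "?B x p < \<infinity>" and Bu: "?B x p = ?G ((x,u),p)" for x p u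
  proof -
    have pP: "p \<in> P0" using p interior_subset by blast
    have inY: "\<forall>w\<in>?S. (x,u) \<in> YL w \<and> f x u w \<in> Yp" using Gfin[of x u p] Bf Bu by auto
    define g where "g q = (\<Sum>w\<in>?S. pmf W w * (real_of_ereal (L x u w q) + real_of_ereal (\<phi> (f x u w) q)))" for q
    have Gg: "?G ((x,u),q) = ereal (g q)" if q: "q \<in> P0" for q
    proof -
      have "ereal (pmf W w) * (L x u w q + \<phi> (f x u w) q) = ereal (pmf W w * (real_of_ereal (L x u w q) + real_of_ereal (\<phi> (f x u w) q)))"
        if w: "w \<in> ?S" for w
      proof -
        have "L x u w q \<noteq> \<infinity>" "\<phi> (f x u w) q \<noteq> \<infinity>"
          using YL(1)[OF w, of "(x,u)" q] Yp(1)[of "f x u w" q] inY w q by (auto simp: less_top)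
        moreover have "L x u w q \<noteq> -\<infinity>" "\<phi> (f x u w) q \<noteq> -\<infinity>" using nI phi_nI[OF ctx] by auto
        ultimately show ?thesis by (cases "L x u w q"; cases "\<phi> (f x u w) q") auto
      qed
      then have "?G ((x,u),q) = (\<Sum>w\<in>?S. ereal (pmf W w * (real_of_ereal (L x u w q) + real_of_ereal (\<phi> (f x u w) q))))"
        unfolding GG_expect expect_def by (intro sum.cong) auto
      also have "\<dots> = ereal (g q)" unfolding g_def by (rule sum_ereal)
      finally show ?thesis .
    qed
    have cv: "convex_fun (\<lambda>q. ?B x q)"
      using conv_compose[OF B_conv[OF ctx] affine_slice[of x]] by simp
    have dL: "((\<lambda>q. real_of_ereal (L x u w q)) has_derivative (\<lambda>h. grad (\<lambda>q. real_of_ereal (L x u w q)) p \<bullet> h)) (at p)"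
      if w: "w \<in> ?S" for w
      using YL(2)[OF w, of "(x,u)" p] inY w p by (intro grad_ok) simp
    have dP: "((\<lambda>q. real_of_ereal (\<phi> (f x u w) q)) has_derivative (\<lambda>h. grad (\<lambda>q. real_of_ereal (\<phi> (f x u w) q)) p \<bullet> h)) (at p)"
      if w: "w \<in> ?S" for w
      using Yp(2) inY w p by (intro grad_ok) simp
    have dg: "(g has_derivative (\<lambda>h. \<Sum>w\<in>?S. pmf W w * (grad (\<lambda>q. real_of_ereal (L x u w q)) p \<bullet> h + grad (\<lambda>q. real_of_ereal (\<phi> (f x u w) q)) p \<bullet> h))) (at p)"
      unfolding g_def[abs_def]
      by (intro has_derivative_sum has_derivative_mult_right has_derivative_add dL dP)
    have "((\<lambda>q. real_of_ereal (?B x q)) has_derivative (\<lambda>h. \<Sum>w\<in>?S. pmf W w * (grad (\<lambda>q. real_of_ereal (L x u w q)) p \<bullet> h + grad (\<lambda>q. real_of_ereal (\<phi> (f x u w) q)) p \<bullet> h))) (at p)"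
    proof (rule diff_core[OF p _ _ _ cv dg])
      show "\<forall>q\<in>P0. ?B x q \<le> ereal (g q)"
      proof
        fix q assume q: "q \<in> P0"
        have "?B x q \<le> ?G ((x,u),q)" by (rule B_le[OF ctx])
        with Gg[OF q] show "?B x q \<le> ereal (g q)" by simp
      qed
      show "?B x p = ereal (g p)" using Bu Gg[OF pP] by simp
      show "\<forall>q. ?B x q \<noteq> -\<infinity>" using B_nI[OF ctx] by blast
    qed
    moreover have "(\<lambda>h. \<Sum>w\<in>?S. pmf W w * (grad (\<lambda>q. real_of_ereal (L x u w q)) p \<bullet> h + grad (\<lambda>q. real_of_ereal (\<phi> (f x u w) q)) p \<bullet> h))
      = (\<lambda>h. (\<Sum>w\<in>?S. pmf W w *\<^sub>R
                     (grad (\<lambda>q. real_of_ereal (L x u w q)) p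
                      + grad (\<lambda>q. real_of_ereal (\<phi> (f x u w) q)) p)) \<bullet> h)"
      by (simp add: inner_sum_left inner_add_left)
    ultimately show ?thesis by simp
  qed
  have T: "?B \<in> Theta P0"
    unfolding Theta_def
  proof (intro CollectI conjI exI[of _ Y'])
    show "?B \<in> Gamma" by (rule B_Gamma[OF ctx])
    show "{(y, p). ?B y p < \<infinity>} = Y' \<times> P0" using Bfin by auto
    show "\<forall>y\<in>Y'. \<forall>q\<in>interior P0. (\<lambda>p. real_of_ereal (?B y p)) differentiable (at q)"
    proof (intro ballI)
      fix y q assume y: "y \<in> Y'" and q: "q \<in> interior P0"
      then have Bf: "?B y q < \<infinity>" using Bfin interior_subset by blast
      obtain u where "?B y q = ?G ((y,u),q)" using B_attain[OF ctx] by blast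
      from DER[OF q Bf this] show "(\<lambda>p. real_of_ereal (?B y p)) differentiable (at q)"
        unfolding differentiable_def by blast
    qed
  qed
  have "(\<exists>u. ?B x p = expect W (\<lambda>w. L x u w p + \<phi> (f x u w) p))" for x p
    using B_attain[OF ctx, of x p] unfolding GG_expect .
  moreover have "((\<lambda>q. real_of_ereal (?B x q)) has_derivative
                 (\<lambda>h. (\<Sum>w\<in>set_pmf W. pmf W w *\<^sub>R
                     (grad (\<lambda>q. real_of_ereal (L x u w q)) p
                      + grad (\<lambda>q. real_of_ereal (\<phi> (f x u w) q)) p)) \<bullet> h)) (at p)"
    if "?B x p < \<infinity> \<and> p \<in> interior P0" "?B x p = expect W (\<lambda>w. L x u w p + \<phi> (f x u w) p)" for x p u
    using DER[of p x u] that unfolding GG_expect by blast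
  ultimately show ?thesis using T by blast
qed



theorem theorem1:
  fixes W :: "'w::euclidean_space pmf"
    and L :: "'x::euclidean_space \<Rightarrow> 'u::euclidean_space \<Rightarrow> 'w \<Rightarrow> 'p::euclidean_space \<Rightarrow> ereal"
    and f :: "'x \<Rightarrow> 'u \<Rightarrow> 'w \<Rightarrow> 'x"
  assumes "finite (set_pmf W)"
    and "\<forall>x u w p. L x u w p \<noteq> -\<infinity>"
    and "\<forall>w. affine_map (\<lambda>(x,u). f x u w)"
  shows
   "((\<forall>w\<in>set_pmf W. Lw L w \<in> GammaK) \<longrightarrow>
        (\<forall>\<phi>\<in>Gamma. bellman W L f \<phi> \<in> Gamma))
    \<and> (\<forall>P0 :: 'p set. (\<forall>w\<in>set_pmf W. Lw L w \<in> ThetaK P0) \<longrightarrow>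
        (\<forall>\<phi>\<in>Theta P0. bellman W L f \<phi> \<in> Theta P0) \<and>
        (\<forall>\<phi>\<in>Theta P0. \<forall>x p. bellman W L f \<phi> x p < \<infinity> \<and> p \<in> interior P0 \<longrightarrow>
           (\<exists>u. bellman W L f \<phi> x p = expect W (\<lambda>w. L x u w p + \<phi> (f x u w) p)) \<and>
           (\<forall>u. bellman W L f \<phi> x p = expect W (\<lambda>w. L x u w p + \<phi> (f x u w) p) \<longrightarrow>
              ((\<lambda>q. real_of_ereal (bellman W L f \<phi> x q)) has_derivative
                 (\<lambda>h. (\<Sum>w\<in>set_pmf W. pmf W w *\<^sub>R
                     (grad (\<lambda>q. real_of_ereal (L x u w q)) p
                      + grad (\<lambda>q. real_of_ereal (\<phi> (f x u w) q)) p)) \<bullet> h)) (at p))))"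
proof (intro conjI)
  show "(\<forall>w\<in>set_pmf W. Lw L w \<in> GammaK) \<longrightarrow> (\<forall>\<phi>\<in>Gamma. bellman W L f \<phi> \<in> Gamma)"
    using B_Gamma[OF assms] by blast
  show "\<forall>P0 :: 'p set. (\<forall>w\<in>set_pmf W. Lw L w \<in> ThetaK P0) \<longrightarrow>
        (\<forall>\<phi>\<in>Theta P0. bellman W L f \<phi> \<in> Theta P0) \<and>
        (\<forall>\<phi>\<in>Theta P0. \<forall>x p. bellman W L f \<phi> x p < \<infinity> \<and> p \<in> interior P0 \<longrightarrow>
           (\<exists>u. bellman W L f \<phi> x p = expect W (\<lambda>w. L x u w p + \<phi> (f x u w) p)) \<and>
           (\<forall>u. bellman W L f \<phi> x p = expect W (\<lambda>w. L x u w p + \<phi> (f x u w) p) \<longrightarrow>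
              ((\<lambda>q. real_of_ereal (bellman W L f \<phi> x q)) has_derivative
                 (\<lambda>h. (\<Sum>w\<in>set_pmf W. pmf W w *\<^sub>R
                     (grad (\<lambda>q. real_of_ereal (L x u w q)) p
                      + grad (\<lambda>q. real_of_ereal (\<phi> (f x u w) q)) p)) \<bullet> h)) (at p)))"
    using part2[OF assms] by blast
qed

end
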